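(* For $\mathcal S=\{000,001,010,111\}\subseteq\{0,1\}^3$, every 3SS scheme with domain $\mathcal S$ satisfies $|\{\mathbf w:\Pr[\psi(\mathbf x,R)=\mathbf w]>0\}|\ge 6$ for some $\mathbf x\in\mathcal S$ (indeed for $\mathbf x=001$); in particular $\rho(\mathcal S)\ge\log_2 6$.
   Context: Binary triples $(x_1,x_2,x_3)\in\{0,1\}^3$ are written $x_1x_2x_3$. Let $\mathcal S\subseteq\{0,1\}^3$ be nonempty. A distribution scheme with domain $\mathcal S$ is a pair $(P_R,\psi)$ where $P_R$ is a probability distribution on a finite set $\mathcal R$ and $\psi:\mathcal S\times\mathcal R\to\mathcal W_{12}\times\mathcal W_{23}\times\mathcal W_{31}$ for finite share alphabets. Given $\mathbf x=(x_1,x_2,x_3)\in\mathcal S$, the shares are $(W_{12},W_{23},W_{31})=\psi(\mathbf x,R)$, $R\sim P_R$. Party $P_1$ sees $V_1=(W_{12},W_{31})$, $P_2$ sees $V_2=(W_{23},W_{12})$, $P_3$ sees $V_3=(W_{31},W_{23})$. It is a 3SS scheme if (Correctness) for each $i$ there is a function $\phi_i$ with $\Pr[\phi_i(V_i)=x_i]=1$ for every $\mathbf x\in\mathcal S$, and (Perfect privacy) for each $i$ and all $\mathbf x,\mathbf x'\in\mathcal S$ with $x_i=x'_i$, $V_i$ has the same distribution under secret $\mathbf x$ as under $\mathbf x'$. The randomness complexity $\rho(\mathcal S)$ is the minimum of $\log_2|\mathcal R|$ over all 3SS schemes with domain $\mathcal S$. *)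

theory Defs
  imports "HOL-Probability.Probability_Mass_Function"
begin

text \<open>Bits are encoded as booleans: False = 0, True = 1. A binary triple
  x1 x2 x3 is the tuple (x1, x2, x3).\<close>

type_synonym triple = "bool \<times> bool \<times> bool"

definition bit1 :: "triple \<Rightarrow> bool" where "bit1 x = fst x"
definition bit2 :: "triple \<Rightarrow> bool" where "bit2 x = fst (snd x)"
definition bit3 :: "triple \<Rightarrow> bool" where "bit3 x = snd (snd x)"

definition view1 :: "'a \<times> 'b \<times> 'c \<Rightarrow> 'a \<times> 'c" where
  "view1 w = (case w of (w12, w23, w31) \<Rightarrow> (w12, w31))"
definition view2 :: "'a \<times> 'b \<times> 'c \<Rightarrow> 'b \<times> 'a" where
  "view2 w = (case w of (w12, w23, w31) \<Rightarrow> (w23, w12))"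
definition view3 :: "'a \<times> 'b \<times> 'c \<Rightarrow> 'c \<times> 'b" where
  "view3 w = (case w of (w12, w23, w31) \<Rightarrow> (w31, w23))"

definition is_3SS ::
  "triple set \<Rightarrow> ('r::finite) pmf \<Rightarrow>
   (triple \<Rightarrow> 'r \<Rightarrow> ('w12::finite) \<times> ('w23::finite) \<times> ('w31::finite)) \<Rightarrow> bool" where
  "is_3SS S P psi \<longleftrightarrow>
     \<comment> \<open>Correctness\<close>
     (\<exists>phi1. \<forall>x\<in>S. \<forall>r\<in>set_pmf P. phi1 (view1 (psi x r)) = bit1 x) \<and>
     (\<exists>phi2. \<forall>x\<in>S. \<forall>r\<in>set_pmf P. phi2 (view2 (psi x r)) = bit2 x) \<and>
     (\<exists>phi3. \<forall>x\<in>S. \<forall>r\<in>set_pmf P. phi3 (view3 (psi x r)) = bit3 x) \<and>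
     \<comment> \<open>Perfect privacy\<close>
     (\<forall>x\<in>S. \<forall>x'\<in>S. bit1 x = bit1 x' \<longrightarrow>
        map_pmf (\<lambda>r. view1 (psi x r)) P = map_pmf (\<lambda>r. view1 (psi x' r)) P) \<and>
     (\<forall>x\<in>S. \<forall>x'\<in>S. bit2 x = bit2 x' \<longrightarrow>
        map_pmf (\<lambda>r. view2 (psi x r)) P = map_pmf (\<lambda>r. view2 (psi x' r)) P) \<and>
     (\<forall>x\<in>S. \<forall>x'\<in>S. bit3 x = bit3 x' \<longrightarrow>
        map_pmf (\<lambda>r. view3 (psi x r)) P = map_pmf (\<lambda>r. view3 (psi x' r)) P)"

definition share_support ::
  "'r pmf \<Rightarrow> (triple \<Rightarrow> 'r \<Rightarrow> 'w) \<Rightarrow> triple \<Rightarrow> 'w set" where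
  "share_support P psi x = {w. measure_pmf.prob P {r. psi x r = w} > 0}"

definition S_ex :: "triple set" where
  "S_ex = {(False, False, False), (False, False, True), (False, True, False), (True, True, True)}"

end

theory Submission
  imports Defs
begin

lemma core:
  fixes T0 T1 T2 T3 :: "('a \<times> 'b \<times> 'c) set"
  assumes A01: "\<And>a b c. (a,b,c) \<in> T0 \<Longrightarrow> \<exists>b'. (a,b',c) \<in> T1"
    and A10: "\<And>a b c. (a,b,c) \<in> T1 \<Longrightarrow> \<exists>b'. (a,b',c) \<in> T0"
    and A21: "\<And>a b c. (a,b,c) \<in> T2 \<Longrightarrow> \<exists>b'. (a,b',c) \<in> T1"
    and d1: "\<And>a b c b'. (a,b,c) \<in> T3 \<Longrightarrow> (a,b',c) \<in> T1 \<Longrightarrow> False"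
    and B01: "\<And>a b c. (a,b,c) \<in> T0 \<Longrightarrow> \<exists>c'. (a,b,c') \<in> T1"
    and B32: "\<And>a b c. (a,b,c) \<in> T3 \<Longrightarrow> \<exists>c'. (a,b,c') \<in> T2"
    and d2: "\<And>a b c c'. (a,b,c) \<in> T0 \<Longrightarrow> (a,b,c') \<in> T2 \<Longrightarrow> False"
    and C02: "\<And>a b c. (a,b,c) \<in> T0 \<Longrightarrow> \<exists>a'. (a',b,c) \<in> T2"
    and C13: "\<And>a b c. (a,b,c) \<in> T1 \<Longrightarrow> \<exists>a'. (a',b,c) \<in> T3"
    and d3: "\<And>a b c a'. (a,b,c) \<in> T0 \<Longrightarrow> (a',b,c) \<in> T1 \<Longrightarrow> False"
    and ne: "T1 \<noteq> {}" and fin: "finite T1"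
  shows "card T1 \<ge> 6"
proof -
  have two: "\<exists>y' z'. (x,y',z') \<in> T1 \<and> y' \<noteq> y" if xyz: "(x,y,z) \<in> T1" for x y z
  proof -
    obtain \<beta> where b: "(x,\<beta>,z) \<in> T0" using A10[OF xyz] by blast
    have "\<beta> \<noteq> y" using d3[OF b] xyz by blast
    moreover obtain z' where "(x,\<beta>,z') \<in> T1" using B01[OF b] by blast
    ultimately show ?thesis by blast
  qed
  obtain p b c where w1: "(p,b,c) \<in> T1" using ne by (metis ex_in_conv prod_cases3)
  obtain q where q: "(q,b,c) \<in> T3" using C13[OF w1] by blast
  have pq: "p \<noteq> q" using d1[OF q] w1 by blast
  obtain b0 where b0: "(p,b0,c) \<in> T0" using A10[OF w1] by blast
  obtain a2 where a2: "(a2,b0,c) \<in> T2" using C02[OF b0] by blast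
  have pa2: "p \<noteq> a2" using d2[OF b0] a2 by blast
  obtain b2 where b2: "(a2,b2,c) \<in> T1" using A21[OF a2] by blast
  have qa2: "q \<noteq> a2" using d1[OF q] b2 by blast
  obtain c3 where c3: "(q,b,c3) \<in> T2" using B32[OF q] by blast
  obtain bq where bq: "(q,bq,c3) \<in> T1" using A21[OF c3] by blast
  obtain y1 z1 where e1: "(p,y1,z1) \<in> T1" "y1 \<noteq> b" using two[OF w1] by blast
  obtain y3 z3 where e3: "(q,y3,z3) \<in> T1" "y3 \<noteq> bq" using two[OF bq] by blast
  obtain y5 z5 where e5: "(a2,y5,z5) \<in> T1" "y5 \<noteq> b2" using two[OF b2] by blast
  let ?S = "{(p,b,c),(p,y1,z1),(q,bq,c3),(q,y3,z3),(a2,b2,c),(a2,y5,z5)}"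
  have "card ?S = 6" using pq pa2 qa2 e1(2) e3(2) e5(2) by auto
  moreover have "?S \<subseteq> T1" using w1 e1 bq e3 b2 e5 by auto
  ultimately show ?thesis using card_mono[OF fin] by metis
qed

lemma supp_eq: "share_support P psi x = psi x ` set_pmf P"
proof -
  have "measure_pmf.prob P {r. psi x r = w} > 0 \<longleftrightarrow> w \<in> psi x ` set_pmf P" for w
  proof
    assume "measure_pmf.prob P {r. psi x r = w} > 0"
    hence "measure_pmf.prob P {r. psi x r = w} \<noteq> 0" by simp
    hence "set_pmf P \<inter> {r. psi x r = w} \<noteq> {}" unfolding measure_pmf_zero_iff .
    thus "w \<in> psi x ` set_pmf P" by blast
  next
    assume "w \<in> psi x ` set_pmf P"
    then obtain r where "r \<in> set_pmf P" "psi x r = w" by blast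
    thus "measure_pmf.prob P {r. psi x r = w} > 0" by (intro measure_pmf_posI) auto
  qed
  thus ?thesis unfolding share_support_def by blast
qed

theorem mainTheorem5:
  fixes P :: "'r::finite pmf"
    and psi :: "triple \<Rightarrow> 'r \<Rightarrow> ('w12::finite) \<times> ('w23::finite) \<times> ('w31::finite)"
  assumes "is_3SS S_ex P psi"
  shows "card (share_support P psi (False, False, True)) \<ge> 6
         \<and> log 2 (real CARD('r)) \<ge> log 2 6"
proof -
  define x0 where "x0 = (False, False, False)"
  define x1 where "x1 = (False, False, True)"
  define x2 where "x2 = (False, True, False)"
  define x3 where "x3 = (True, True, True)"
  define T where "T x = psi x ` set_pmf P" for x
  have inS: "x0 \<in> S_ex" "x1 \<in> S_ex" "x2 \<in> S_ex" "x3 \<in> S_ex"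
    by (auto simp: S_ex_def x0_def x1_def x2_def x3_def)
  note H = assms[unfolded is_3SS_def]
  obtain phi1 where c1: "\<forall>x\<in>S_ex. \<forall>r\<in>set_pmf P. phi1 (view1 (psi x r)) = bit1 x"
    using H[THEN conjunct1] by (elim exE)
  obtain phi2 where c2: "\<forall>x\<in>S_ex. \<forall>r\<in>set_pmf P. phi2 (view2 (psi x r)) = bit2 x"
    using H[THEN conjunct2, THEN conjunct1] by (elim exE)
  obtain phi3 where c3: "\<forall>x\<in>S_ex. \<forall>r\<in>set_pmf P. phi3 (view3 (psi x r)) = bit3 x"
    using H[THEN conjunct2, THEN conjunct2, THEN conjunct1] by (elim exE)
  note p1 = H[THEN conjunct2, THEN conjunct2, THEN conjunct2, THEN conjunct1]
  note p2 = H[THEN conjunct2, THEN conjunct2, THEN conjunct2, THEN conjunct2, THEN conjunct1]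
  note p3 = H[THEN conjunct2, THEN conjunct2, THEN conjunct2, THEN conjunct2, THEN conjunct2]
  have img1: "view1 ` T x = view1 ` T x'" if "x \<in> S_ex" "x' \<in> S_ex" "bit1 x = bit1 x'" for x x'
  proof -
    have "set_pmf (map_pmf (\<lambda>r. view1 (psi x r)) P) = set_pmf (map_pmf (\<lambda>r. view1 (psi x' r)) P)"
      using p1[rule_format, OF that] by (rule arg_cong)
    thus ?thesis unfolding T_def by (simp add: image_image)
  qed
  have img2: "view2 ` T x = view2 ` T x'" if "x \<in> S_ex" "x' \<in> S_ex" "bit2 x = bit2 x'" for x x'
  proof -
    have "set_pmf (map_pmf (\<lambda>r. view2 (psi x r)) P) = set_pmf (map_pmf (\<lambda>r. view2 (psi x' r)) P)"
      using p2[rule_format, OF that] by (rule arg_cong)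
    thus ?thesis unfolding T_def by (simp add: image_image)
  qed
  have img3: "view3 ` T x = view3 ` T x'" if "x \<in> S_ex" "x' \<in> S_ex" "bit3 x = bit3 x'" for x x'
  proof -
    have "set_pmf (map_pmf (\<lambda>r. view3 (psi x r)) P) = set_pmf (map_pmf (\<lambda>r. view3 (psi x' r)) P)"
      using p3[rule_format, OF that] by (rule arg_cong)
    thus ?thesis unfolding T_def by (simp add: image_image)
  qed
  have cor1: "phi1 (view1 w) = bit1 x" if "x \<in> S_ex" "w \<in> T x" for x w
    using c1 that unfolding T_def by blast
  have cor2: "phi2 (view2 w) = bit2 x" if "x \<in> S_ex" "w \<in> T x" for x w
    using c2 that unfolding T_def by blast
  have cor3: "phi3 (view3 w) = bit3 x" if "x \<in> S_ex" "w \<in> T x" for x w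
    using c3 that unfolding T_def by blast
  have bits: "bit1 x0 = False" "bit1 x1 = False" "bit1 x2 = False" "bit1 x3 = True"
    "bit2 x0 = False" "bit2 x1 = False" "bit2 x2 = True" "bit2 x3 = True"
    "bit3 x0 = False" "bit3 x1 = True" "bit3 x2 = False" "bit3 x3 = True"
    by (auto simp: bit1_def bit2_def bit3_def x0_def x1_def x2_def x3_def)
  have i01: "view1 ` T x0 = view1 ` T x1" by (rule img1) (use inS bits in auto)
  have i21: "view1 ` T x2 = view1 ` T x1" by (rule img1) (use inS bits in auto)
  have j01: "view2 ` T x0 = view2 ` T x1" by (rule img2) (use inS bits in auto)
  have j32: "view2 ` T x3 = view2 ` T x2" by (rule img2) (use inS bits in auto)
  have k02: "view3 ` T x0 = view3 ` T x2" by (rule img3) (use inS bits in auto)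
  have k13: "view3 ` T x1 = view3 ` T x3" by (rule img3) (use inS bits in auto)
  have main: "card (T x1) \<ge> 6"
  proof (rule core[of "T x0" "T x1" "T x2" "T x3"])
    fix a b c assume h: "(a,b,c) \<in> T x0"
    have "(a,c) \<in> view1 ` T x1" using i01 h by (metis image_eqI view1_def prod.case)
    thus "\<exists>b'. (a,b',c) \<in> T x1" by (auto simp: view1_def split: prod.splits)
  next
    fix a b c assume h: "(a,b,c) \<in> T x1"
    have "(a,c) \<in> view1 ` T x0" using i01 h by (metis image_eqI view1_def prod.case)
    thus "\<exists>b'. (a,b',c) \<in> T x0" by (auto simp: view1_def split: prod.splits)
  next
    fix a b c assume h: "(a,b,c) \<in> T x2"
    have "(a,c) \<in> view1 ` T x1" using i21 h by (metis image_eqI view1_def prod.case)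
    thus "\<exists>b'. (a,b',c) \<in> T x1" by (auto simp: view1_def split: prod.splits)
  next
    fix a b c b' assume "(a,b,c) \<in> T x3" "(a,b',c) \<in> T x1"
    then show False using cor1[of x3 "(a,b,c)"] cor1[of x1 "(a,b',c)"] inS bits
      by (simp add: view1_def)
  next
    fix a b c assume h: "(a,b,c) \<in> T x0"
    have "(b,a) \<in> view2 ` T x1" using j01 h by (metis image_eqI view2_def prod.case)
    thus "\<exists>c'. (a,b,c') \<in> T x1" by (auto simp: view2_def split: prod.splits)
  next
    fix a b c assume h: "(a,b,c) \<in> T x3"
    have "(b,a) \<in> view2 ` T x2" using j32 h by (metis image_eqI view2_def prod.case)
    thus "\<exists>c'. (a,b,c') \<in> T x2" by (auto simp: view2_def split: prod.splits)
  next
    fix a b c c' assume "(a,b,c) \<in> T x0" "(a,b,c') \<in> T x2"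
    then show False using cor2[of x0 "(a,b,c)"] cor2[of x2 "(a,b,c')"] inS bits
      by (simp add: view2_def)
  next
    fix a b c assume h: "(a,b,c) \<in> T x0"
    have "(c,b) \<in> view3 ` T x2" using k02 h by (metis image_eqI view3_def prod.case)
    thus "\<exists>a'. (a',b,c) \<in> T x2" by (auto simp: view3_def split: prod.splits)
  next
    fix a b c assume h: "(a,b,c) \<in> T x1"
    have "(c,b) \<in> view3 ` T x3" using k13 h by (metis image_eqI view3_def prod.case)
    thus "\<exists>a'. (a',b,c) \<in> T x3" by (auto simp: view3_def split: prod.splits)
  next
    fix a b c a' assume "(a,b,c) \<in> T x0" "(a',b,c) \<in> T x1"
    then show False using cor3[of x0 "(a,b,c)"] cor3[of x1 "(a',b,c)"] inS bits
      by (simp add: view3_def)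
  next
    show "T x1 \<noteq> {}" by (simp add: T_def set_pmf_not_empty)
  next
    show "finite (T x1)" by (simp add: T_def)
  qed
  have "card (T x1) \<le> card (set_pmf P)" unfolding T_def by (rule card_image_le) simp
  also have "\<dots> \<le> CARD('r)" by (rule card_mono) auto
  finally have "6 \<le> CARD('r)" using main by linarith
  hence "log 2 6 \<le> log 2 (real CARD('r))" by (intro log_mono) auto
  thus ?thesis using main by (simp add: supp_eq T_def x1_def)
qed

end
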